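(* Assume $0\le\gamma\le2$, (H1) and (H2). Let $f$ be measurable with $0\le f\le1$ and $\|f\|_{1,2}<\infty$, and suppose that for some $\bar v\in\mathbb{R}^3$, $\delta>0$ and $0<\epsilon<1$ we have $f(v)\ge\epsilon$ whenever $|v-\bar v|\le\delta$. Then there exist constants $C_1,C_2>0$ depending only on $\gamma,C_b,c_b$ such that for every $0<\eta<1-\frac1{\sqrt2}$ and every $v$ with $\delta<|v-\bar v|\le\sqrt2\,\delta(1-\eta)$, $$Q_1(f,f,1-f)(v)\ge\delta^{3+\gamma}\epsilon^2\Big(C_1\eta^{5/2}-C_2\min\{\delta^{-3}\|f\|_{1,2}^{3/5},1\}\Big).$$ If moreover $f(v)\le1-\epsilon$ whenever $|v-\bar v|\le\delta$, then there is $C_3>0$ depending only on $\gamma$ and $c_b$ such that for the same $\eta,v$, $$Q_1(f,f,1-f)(v)\ge C_3\delta^{3+\gamma}\eta^{5/2}\epsilon^3,\qquad Q_1(1-f,1-f,f)(v)\ge C_3\delta^{3+\gamma}\eta^{5/2}\epsilon^3.$$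
   Context: Throughout, $v,v_*\in\mathbb{R}^3$, $\sigma\in\mathbb{S}^2$, and the post-collisional velocities are $v'=\frac{v+v_*}{2}+\frac{|v-v_*|}{2}\sigma$, $v'_*=\frac{v+v_*}{2}-\frac{|v-v_*|}{2}\sigma$; the angle $\theta\in[0,\pi]$ is defined by $\cos\theta=\frac{v-v_*}{|v-v_*|}\cdot\sigma$. The collision kernel is $B(v-v_*,\sigma)=|v-v_*|^\gamma b(\cos\theta)$ with $\gamma\ge0$ and $b\ge0$ measurable with $b(\cos(\pi-\theta))=b(\cos\theta)$. (H1): $0<C_b:=2\pi\int_0^\pi b(\cos\theta)\sin\theta\,d\theta<\infty$. (H2): there is $c_b>0$ with $b(\cos\theta)>c_b$ for $\theta\in[\pi/4,3\pi/4]$. $\|f\|_{1,s}=\int_{\mathbb{R}^3}|f(v)|(1+|v|^2)^{s/2}dv$. For measurable $f_1,f_2,f_3\ge0$: $Q_1(f_1,f_2,f_3)(v)=\int_{\mathbb{R}^3\times\mathbb{S}^2}B(v-v_*,\sigma)f_1(v')f_2(v'_* )f_3(v_* )\,d\sigma\,dv_*$. *)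

theory Defs
  imports "HOL-Analysis.Analysis"
begin

type_synonym vec3 = "real^3"

text \<open>Integral over the unit sphere S^2 with respect to the surface measure,
  defined via the cone measure: the surface measure of A equals
  3 times the Lebesgue measure of the cone {r x | 0 < r \<le> 1, x \<in> A}.\<close>
definition sphere_nn_integral :: "(vec3 \<Rightarrow> ennreal) \<Rightarrow> ennreal" where
  "sphere_nn_integral g = 3 * (\<integral>\<^sup>+ x. indicator (ball 0 1) x * g (sgn x) \<partial>lborel)"

definition vpost :: "vec3 \<Rightarrow> vec3 \<Rightarrow> vec3 \<Rightarrow> vec3" where
  "vpost v vs \<sigma> = (1/2) *\<^sub>R (v + vs) + (norm (v - vs) / 2) *\<^sub>R \<sigma>"

definition vpost_star :: "vec3 \<Rightarrow> vec3 \<Rightarrow> vec3 \<Rightarrow> vec3" where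
  "vpost_star v vs \<sigma> = (1/2) *\<^sub>R (v + vs) - (norm (v - vs) / 2) *\<^sub>R \<sigma>"

definition cos_theta :: "vec3 \<Rightarrow> vec3 \<Rightarrow> vec3 \<Rightarrow> real" where
  "cos_theta v vs \<sigma> = ((v - vs) \<bullet> \<sigma>) / norm (v - vs)"

definition kernelB :: "real \<Rightarrow> (real \<Rightarrow> real) \<Rightarrow> vec3 \<Rightarrow> vec3 \<Rightarrow> vec3 \<Rightarrow> real" where
  "kernelB \<gamma> b v vs \<sigma> = norm (v - vs) powr \<gamma> * b (cos_theta v vs \<sigma>)"

definition Q1 :: "real \<Rightarrow> (real \<Rightarrow> real) \<Rightarrow> (vec3 \<Rightarrow> real) \<Rightarrow> (vec3 \<Rightarrow> real)
    \<Rightarrow> (vec3 \<Rightarrow> real) \<Rightarrow> vec3 \<Rightarrow> ennreal" where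
  "Q1 \<gamma> b f1 f2 f3 v = (\<integral>\<^sup>+ vs. sphere_nn_integral (\<lambda>\<sigma>.
      ennreal (kernelB \<gamma> b v vs \<sigma> * f1 (vpost v vs \<sigma>) * f2 (vpost_star v vs \<sigma>) * f3 vs)) \<partial>lborel)"

definition Cb_of :: "(real \<Rightarrow> real) \<Rightarrow> ennreal" where
  "Cb_of b = 2 * ennreal pi * (\<integral>\<^sup>+ \<theta>. indicator {0..pi} \<theta> * ennreal (b (cos \<theta>) * sin \<theta>) \<partial>lborel)"

definition norm1s :: "real \<Rightarrow> (vec3 \<Rightarrow> real) \<Rightarrow> ennreal" where
  "norm1s s f = (\<integral>\<^sup>+ v. ennreal (\<bar>f v\<bar> * (1 + norm v ^ 2) powr (s / 2)) \<partial>lborel)"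

definition admissible_b :: "(real \<Rightarrow> real) \<Rightarrow> bool" where
  "admissible_b b \<longleftrightarrow> b \<in> borel_measurable borel \<and> (\<forall>t\<in>{-1..1}. b t \<ge> 0)
     \<and> (\<forall>\<theta>\<in>{0..pi}. b (cos (pi - \<theta>)) = b (cos \<theta>))"

end

theory Submission
  imports Defs
begin

lemma prod_UNIV_3: "prod f (UNIV::3 set) = f 1 * f 2 * f 3"
  unfolding UNIV_3 by (simp add: ac_simps)

lemma box_meas:
  fixes w :: real assumes "0 < w"
  shows "measure lborel (cbox (vector [1/2, 0, 0]) (vector [3/5, 1/10, w/2]) :: vec3 set) = w/200"
proof -
  have "(vector [1/2, 0, 0]::vec3) \<in> cbox (vector [1/2, 0, 0]) (vector [3/5, 1/10, w/2])"
    using assms by (simp add: mem_box_cart forall_3)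
  then have ne: "cbox (vector [1/2, 0, 0]) (vector [3/5, 1/10, w/2]) \<noteq> ({}::vec3 set)" by blast
  have "measure lborel (cbox (vector [1/2, 0, 0]) (vector [3/5, 1/10, w/2]) :: vec3 set)
     = (\<Prod>i\<in>UNIV. (vector [3/5, 1/10, w/2]::vec3) $ i - (vector [1/2, 0, 0]::vec3) $ i)"
    by (rule content_cbox_cart[OF ne])
  also have "\<dots> = w/200" unfolding prod_UNIV_3 by simp
  finally show ?thesis .
qed

lemma norm3_sq: "(norm (y::vec3))^2 = (y$1)^2 + (y$2)^2 + (y$3)^2"
  unfolding power2_norm_eq_inner by (simp add: inner_vec_def sum_3 power2_eq_square)

lemma band:
  fixes n :: vec3 and w :: real
  assumes n1: "norm n = 1" and w: "0 < w" "w \<le> 1"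
  shows "\<exists>E. E \<in> sets lborel \<and> E \<subseteq> ball 0 1 \<and> ennreal (w/200) \<le> emeasure lborel E
     \<and> (\<forall>x\<in>E. x \<noteq> 0 \<and> \<bar>sgn x \<bullet> n\<bar> \<le> w)"
proof -
  obtain T :: "vec3 \<Rightarrow> vec3" where T: "orthogonal_transformation T" "T (axis (3::3) 1) = n"
    by (rule orthogonal_transformation_exists_1[OF norm_axis_1[of "3::3"] n1])
  define B :: "vec3 set" where "B = cbox (vector [1/2, 0, 0]) (vector [3/5, 1/10, w/2])"
  have lin: "linear T" using T(1) orthogonal_transformation_linear by blast
  have nT: "\<And>x. norm (T x) = norm x" using T(1) orthogonal_transformation_norm by blast
  have iT: "\<And>x y. T x \<bullet> T y = x \<bullet> y" using T(1) unfolding orthogonal_transformation_def by blast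
  have cB: "compact (T ` B)" unfolding B_def
    by (intro compact_continuous_image linear_continuous_on compact_cbox) (simp add: lin linear_linear)
  have meas: "T ` B \<in> sets lborel" using cB by (simp add: compact_imp_closed borel_closed)
  have pts: "norm y < 1 \<and> 1/2 \<le> norm y \<and> 0 \<le> y$3 \<and> y$3 \<le> w/2" if "y \<in> B" for y
  proof -
    have c: "1/2 \<le> y$1" "y$1 \<le> 3/5" "0 \<le> y$2" "y$2 \<le> 1/10" "0 \<le> y$3" "y$3 \<le> w/2"
      using that unfolding B_def by (auto simp: mem_box_cart forall_3)
    have "(y$1)^2 \<le> (3/5)^2" using c by (intro power_mono) auto
    moreover have "(y$2)^2 \<le> (1/10)^2" using c by (intro power_mono) auto
    moreover have "(y$3)^2 \<le> (1/2)^2" using c w by (intro power_mono) auto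
    ultimately have "(norm y)^2 < 1^2" unfolding norm3_sq by (simp add: power_divide)
    then have "norm y < 1" by (simp add: power_less_imp_less_base)
    moreover have "(1/2)^2 \<le> (y$1)^2" using c by (intro power_mono) auto
    then have "(1/2)^2 \<le> (norm y)^2" unfolding norm3_sq using zero_le_power2[of "y$2"] zero_le_power2[of "y$3"] by linarith
    then have "1/2 \<le> norm y" by (rule power2_le_imp_le) simp
    ultimately show ?thesis using c(5,6) by blast
  qed
  have "T ` B \<subseteq> ball 0 1" using pts nT by auto
  moreover have "\<forall>x\<in>T ` B. x \<noteq> 0 \<and> \<bar>sgn x \<bullet> n\<bar> \<le> w"
  proof
    fix x assume "x \<in> T ` B"
    then obtain y where y: "y \<in> B" "x = T y" by auto
    have p: "norm y < 1" "1/2 \<le> norm y" "0 \<le> y$3" "y$3 \<le> w/2" using pts[OF y(1)] by auto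
    have ny: "norm x = norm y" using y nT by simp
    have "x \<noteq> 0" using ny p by auto
    moreover have "sgn x \<bullet> n = (x \<bullet> n) / norm x" by (simp add: sgn_div_norm divide_inverse_commute)
    moreover have "x \<bullet> n = y$3"
    proof -
      have "x \<bullet> n = T y \<bullet> T (axis 3 1)" using y T(2) by simp
      also have "\<dots> = y \<bullet> axis 3 1" by (rule iT)
      also have "\<dots> = y$3" by (simp add: inner_axis)
      finally show ?thesis .
    qed
    ultimately have e: "sgn x \<bullet> n = y$3 / norm y" using ny by simp
    have "y$3 / norm y \<le> (w/2) / (1/2)"
      using p by (intro frac_le) auto
    then show "x \<noteq> 0 \<and> \<bar>sgn x \<bullet> n\<bar> \<le> w" using e p \<open>x \<noteq> 0\<close> by (simp add: abs_le_iff)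
  qed
  moreover have "emeasure lborel (T ` B) = ennreal (w/200)"
  proof -
    have fin: "emeasure lborel (T ` B) \<noteq> top"
      using emeasure_bounded_finite[OF compact_imp_bounded[OF cB]] by (simp add: less_top)
    have "measure lborel (T ` B) = measure lebesgue (T ` B)" using meas by simp
    also have "\<dots> = measure lebesgue B"
      using measure_orthogonal_image[OF T(1), of B] unfolding B_def by simp
    also have "\<dots> = measure lborel B" unfolding B_def by simp
    also have "\<dots> = w/200" unfolding B_def using box_meas w by simp
    finally have m: "measure lborel (T ` B) = w/200" .
    show ?thesis using emeasure_eq_ennreal_measure[OF fin] m by (simp only:)
  qed
  ultimately show ?thesis using meas by (metis order_refl)
qed

lemma sphere_lower:
  fixes g :: "vec3 \<Rightarrow> ennreal"
  assumes n1: "norm n = 1" and w: "0 < w" "w \<le> 1" and c: "0 \<le> c"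
    and hg: "\<And>\<sigma>. norm \<sigma> = 1 \<Longrightarrow> \<bar>\<sigma> \<bullet> n\<bar> \<le> w \<Longrightarrow> ennreal c \<le> g \<sigma>"
  shows "ennreal (3*c*w/200) \<le> sphere_nn_integral g"
proof -
  obtain E where E: "E \<in> sets lborel" "E \<subseteq> ball 0 1" "ennreal (w/200) \<le> emeasure lborel E"
     "\<forall>x\<in>E. x \<noteq> 0 \<and> \<bar>sgn x \<bullet> n\<bar> \<le> w"
    using band[OF n1 w] by blast
  have pw: "ennreal c * indicator E x \<le> indicator (ball 0 1) x * g (sgn x)" for x
  proof (cases "x \<in> E")
    case True
    then have "x \<in> ball 0 1" "norm (sgn x) = 1" "\<bar>sgn x \<bullet> n\<bar> \<le> w" using E by (auto simp: norm_sgn)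
    then show ?thesis using True hg by simp
  qed simp
  have "ennreal (3*c*w/200) = ennreal 3 * ennreal (c * (w/200))"
    using c w by (subst ennreal_mult[symmetric]) auto
  also have "\<dots> = 3 * (ennreal c * ennreal (w/200))"
    using c w by (simp add: ennreal_mult[of c "w/200", symmetric])
  also have "\<dots> \<le> 3 * (ennreal c * emeasure lborel E)"
    using E(3) by (intro mult_left_mono) auto
  also have "\<dots> = 3 * (\<integral>\<^sup>+ x. ennreal c * indicator E x \<partial>lborel)"
    using E(1) by (simp add: nn_integral_cmult_indicator)
  also have "\<dots> \<le> 3 * (\<integral>\<^sup>+ x. indicator (ball 0 1) x * g (sgn x) \<partial>lborel)"
    by (intro mult_left_mono nn_integral_mono pw) auto
  also have "\<dots> = sphere_nn_integral g" unfolding sphere_nn_integral_def ..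
  finally show ?thesis .
qed

lemma half_sq:
  fixes p \<sigma> :: vec3 and r :: real
  assumes "norm \<sigma> = 1"
  shows "(norm ((1/2) *\<^sub>R p + (r/2) *\<^sub>R \<sigma>))^2 = p \<bullet> p / 4 + (r/2) * (p \<bullet> \<sigma>) + r^2/4"
proof -
  have "\<sigma> \<bullet> \<sigma> = 1" using assms by (metis power2_norm_eq_inner power_one)
  then show ?thesis unfolding power2_norm_eq_inner
  by (simp add: inner_add_left inner_add_right inner_commute power2_eq_square algebra_simps)
qed

lemma para: "(p::vec3) \<bullet> p + (a - u) \<bullet> (a - u) = 2 * (a \<bullet> a) + 2 * (u \<bullet> u)" if "p = a + u"
  using that by (simp add: inner_add_left inner_add_right inner_diff_left inner_diff_right inner_commute)

lemma geo:
  fixes v vs vbar \<sigma> :: vec3 and \<delta> \<eta> :: real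
  assumes d: "0 < \<delta>" and e: "0 < \<eta>" "\<eta> < 3/10"
    and a1: "\<delta> < norm (v - vbar)" and a2: "norm (v - vbar) \<le> sqrt 2 * \<delta> * (1 - \<eta>)"
    and u: "norm (vs - vbar) \<le> \<delta> * sqrt \<eta> / 10"
    and s: "norm \<sigma> = 1"
    and bd: "\<bar>\<sigma> \<bullet> sgn ((v - vbar) + (vs - vbar))\<bar> \<le> \<eta>/4"
  shows "norm (vpost v vs \<sigma> - vbar) \<le> \<delta>" "norm (vpost_star v vs \<sigma> - vbar) \<le> \<delta>"
    "\<delta>/2 \<le> norm (v - vs)" "\<bar>cos_theta v vs \<sigma>\<bar> \<le> 7/10"
proof -
  define a where "a = v - vbar"
  define u where "u = vs - vbar"
  define p where "p = a + u"
  define q where "q = a - u"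
  define r where "r = norm q"
  have qv: "q = v - vs" unfolding q_def a_def u_def by simp
  have "sqrt \<eta> \<le> 1" using e by simp
  then have nu: "norm u \<le> \<delta>/10" using u d unfolding u_def
    by (smt (verit, best) divide_right_mono mult_left_le)
  have "sqrt 2 \<le> 3/2"
    by (rule real_le_lsqrt) (auto simp: power2_eq_square)
  then have "sqrt 2 * \<delta> * (1 - \<eta>) \<le> 3/2 * \<delta> * 1"
    using d e by (intro mult_mono) auto
  then have na: "norm a \<le> 3/2 * \<delta>" using a2 unfolding a_def by simp
  have na1: "\<delta> < norm a" using a1 unfolding a_def by simp
  have np: "norm p \<le> 2 * \<delta>" unfolding p_def using norm_triangle_ineq[of a u] na nu d by simp
  have nq: "norm q \<le> 2 * \<delta>" unfolding q_def using norm_triangle_ineq4[of a u] na nu d by simp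
  have nq2: "\<delta>/2 \<le> norm q" unfolding q_def using norm_triangle_ineq2[of a u] na1 nu d by simp
  have ps: "\<bar>p \<bullet> \<sigma>\<bar> \<le> \<delta> * \<eta> / 2"
  proof -
    have "p \<bullet> \<sigma> = norm p * (\<sigma> \<bullet> sgn p)" by (cases "p = 0") (simp_all add: sgn_div_norm inner_commute field_simps)
    then have "\<bar>p \<bullet> \<sigma>\<bar> = norm p * \<bar>\<sigma> \<bullet> sgn p\<bar>" by (simp add: abs_mult)
    also have "\<dots> \<le> (2 * \<delta>) * (\<eta>/4)"
      using np bd e d unfolding p_def a_def u_def by (intro mult_mono) auto
    finally show ?thesis by simp
  qed
  have aa: "a \<bullet> a \<le> 2 * \<delta>^2 * (1 - \<eta>)"
  proof -
    have "a \<bullet> a = (norm a)^2" by (simp add: power2_norm_eq_inner)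
    also have "\<dots> \<le> (sqrt 2 * \<delta> * (1 - \<eta>))^2" using a2 unfolding a_def by (intro power_mono) auto
    also have "\<dots> = 2 * \<delta>^2 * (1 - \<eta>)^2" by (simp add: power_mult_distrib)
    also have "\<dots> \<le> 2 * \<delta>^2 * (1 - \<eta>)"
    proof -
      have "(1 - \<eta>)^2 \<le> 1 - \<eta>" using e by (simp add: power2_eq_square mult_le_cancel_left1)
      then show ?thesis by (intro mult_left_mono) auto
    qed
    finally show ?thesis .
  qed
  have uu: "u \<bullet> u \<le> \<delta>^2 * \<eta> / 100"
  proof -
    have "u \<bullet> u = (norm u)^2" by (simp add: power2_norm_eq_inner)
    also have "\<dots> \<le> (\<delta> * sqrt \<eta> / 10)^2" using u unfolding u_def by (intro power_mono) auto
    also have "\<dots> = \<delta>^2 * \<eta> / 100" using e by (simp add: power_mult_distrib power_divide)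
    finally show ?thesis .
  qed
  have rps: "\<bar>(r/2) * (p \<bullet> \<sigma>)\<bar> \<le> \<delta> * (\<delta> * \<eta> / 2)"
  proof -
    have "\<bar>(r/2) * (p \<bullet> \<sigma>)\<bar> = (r/2) * \<bar>p \<bullet> \<sigma>\<bar>" unfolding r_def by (simp add: abs_mult)
    also have "\<dots> \<le> \<delta> * (\<delta> * \<eta> / 2)" using nq ps d unfolding r_def by (intro mult_mono) auto
    finally show ?thesis .
  qed
  have key: "(norm ((1/2) *\<^sub>R p + (r/2) *\<^sub>R \<tau>))^2 \<le> \<delta>^2" if t1: "norm \<tau> = 1"
      and t2: "\<bar>(r/2) * (p \<bullet> \<tau>)\<bar> \<le> \<delta> * (\<delta> * \<eta> / 2)" for \<tau>
  proof -
    have "(norm ((1/2) *\<^sub>R p + (r/2) *\<^sub>R \<tau>))^2 = p \<bullet> p / 4 + (r/2) * (p \<bullet> \<tau>) + r^2/4"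
      by (rule half_sq[OF t1])
    also have "r^2 = q \<bullet> q" unfolding r_def by (simp add: power2_norm_eq_inner)
    also have "p \<bullet> p / 4 + (r/2) * (p \<bullet> \<tau>) + q \<bullet> q / 4 = (a \<bullet> a + u \<bullet> u)/2 + (r/2) * (p \<bullet> \<tau>)"
      using para[of p a u] unfolding p_def q_def by simp
    also have "\<dots> \<le> (2 * \<delta>^2 * (1 - \<eta>) + \<delta>^2 * \<eta> / 100)/2 + \<delta> * (\<delta> * \<eta> / 2)"
    proof -
      have "(r/2) * (p \<bullet> \<tau>) \<le> \<delta> * (\<delta> * \<eta> / 2)" using t2 by linarith
      then show ?thesis using aa uu by (simp add: field_simps)
    qed
    also have "\<dots> = \<delta>^2 - (99/200) * (\<delta>^2 * \<eta>)" by (simp add: power2_eq_square field_simps)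
    also have "\<dots> \<le> \<delta>^2" using e by simp
    finally show ?thesis .
  qed
  have rq: "r = norm (v - vs)" by (simp add: r_def qv)
  have vp: "vpost v vs \<sigma> - vbar = (1/2) *\<^sub>R p + (r/2) *\<^sub>R \<sigma>"
    unfolding vpost_def p_def rq a_def u_def by (simp add: vec_eq_iff algebra_simps)
  have vps: "vpost_star v vs \<sigma> - vbar = (1/2) *\<^sub>R p + (r/2) *\<^sub>R (-\<sigma>)"
    unfolding vpost_star_def p_def rq a_def u_def by (simp add: vec_eq_iff algebra_simps)
  have "(norm (vpost v vs \<sigma> - vbar))^2 \<le> \<delta>^2" unfolding vp using key[OF s rps] .
  then show "norm (vpost v vs \<sigma> - vbar) \<le> \<delta>" by (rule power2_le_imp_le) (use d in auto)
  have rps': "\<bar>(r/2) * (p \<bullet> -\<sigma>)\<bar> \<le> \<delta> * (\<delta> * \<eta> / 2)" using rps by simp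
  have s': "norm (-\<sigma>) = 1" using s by simp
  have "(norm (vpost_star v vs \<sigma> - vbar))^2 \<le> \<delta>^2" unfolding vps
    using key[OF s' rps'] .
  then show "norm (vpost_star v vs \<sigma> - vbar) \<le> \<delta>" by (rule power2_le_imp_le) (use d in auto)
  show "\<delta>/2 \<le> norm (v - vs)" using nq2 unfolding qv .
  have qs: "\<bar>q \<bullet> \<sigma>\<bar> \<le> 7/20 * \<delta>"
  proof -
    have "q \<bullet> \<sigma> = p \<bullet> \<sigma> - 2 * (u \<bullet> \<sigma>)" unfolding p_def q_def by (simp add: inner_add_left inner_diff_left)
    moreover have "\<bar>u \<bullet> \<sigma>\<bar> \<le> \<delta>/10" using Cauchy_Schwarz_ineq2[of u \<sigma>] s nu by simp
    moreover have "\<delta> * \<eta> / 2 \<le> \<delta> * (3/10) / 2" using d e by simp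
    ultimately show ?thesis using ps by linarith
  qed
  have "\<bar>cos_theta v vs \<sigma>\<bar> = \<bar>q \<bullet> \<sigma>\<bar> / norm q" unfolding cos_theta_def qv by simp
  also have "\<dots> \<le> (7/20 * \<delta>) / (\<delta>/2)" using qs nq2 d by (intro frac_le) auto
  also have "\<dots> = 7/10" using d by simp
  finally show "\<bar>cos_theta v vs \<sigma>\<bar> \<le> 7/10" .
qed

lemma b_bound:
  assumes hb: "\<forall>\<theta>\<in>{pi/4..3*pi/4}. b (cos \<theta>) > cb" and t: "\<bar>t\<bar> \<le> 7/10"
  shows "b t > cb"
proof -
  have s2: "7/10 \<le> sqrt 2 / 2"
  proof -
    have "7/5 \<le> sqrt 2" by (rule real_le_rsqrt) (simp add: power2_eq_square)
    then show ?thesis by simp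
  qed
  have s3: "sqrt 2 \<le> 2" by (rule real_le_lsqrt) (auto simp: power2_eq_square)
  have t1: "-1 \<le> t" "t \<le> 1" using t by auto
  have a45: "arccos (sqrt 2 / 2) = pi/4" using arccos_cos[of "pi/4"] cos_45 by simp
  have "arccos (sqrt 2 / 2) \<le> arccos t"
    using t s2 s3 by (intro arccos_le_arccos) auto
  moreover have "arccos t \<le> arccos (- (sqrt 2 / 2))"
    using t s2 s3 by (intro arccos_le_arccos) auto
  moreover have "arccos (- (sqrt 2 / 2)) = pi - pi/4"
    using arccos_minus[of "sqrt 2 / 2"] a45 s2 s3 by simp
  ultimately have "arccos t \<in> {pi/4..3*pi/4}" using a45 by auto
  then have "b (cos (arccos t)) > cb" using hb by blast
  then show ?thesis using t1 by simp
qed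

lemma powr_bound:
  fixes x \<delta> \<gamma> :: real
  assumes "0 < \<delta>" "\<delta>/2 \<le> x" "0 \<le> \<gamma>" "\<gamma> \<le> 2"
  shows "\<delta> powr \<gamma> / 4 \<le> x powr \<gamma>"
proof -
  have "2 powr \<gamma> \<le> 2 powr 2" using assms by (intro powr_mono) auto
  then have p4: "2 powr \<gamma> \<le> 4" by simp
  have "\<delta> powr \<gamma> / 4 \<le> \<delta> powr \<gamma> / 2 powr \<gamma>"
    using p4 by (intro divide_left_mono) auto
  also have "\<dots> = (\<delta>/2) powr \<gamma>" by (simp add: powr_divide)
  also have "\<dots> \<le> x powr \<gamma>" using assms by (intro powr_mono2) auto
  finally show ?thesis .
qed

lemma inner_bound:
  fixes v vs vbar :: vec3 and \<delta> \<eta> \<gamma> cb \<epsilon> :: real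
    and b :: "real \<Rightarrow> real" and f1 f2 f3 :: "vec3 \<Rightarrow> real"
  assumes d: "0 < \<delta>" and e: "0 < \<eta>" "\<eta> < 3/10"
    and a1: "\<delta> < norm (v - vbar)" and a2: "norm (v - vbar) \<le> sqrt 2 * \<delta> * (1 - \<eta>)"
    and u: "norm (vs - vbar) \<le> \<delta> * sqrt \<eta> / 10"
    and g: "0 \<le> \<gamma>" "\<gamma> \<le> 2" and cb: "0 < cb"
    and hb: "\<forall>\<theta>\<in>{pi/4..3*pi/4}. b (cos \<theta>) > cb"
    and ep: "0 \<le> \<epsilon>" and hf: "\<And>w. norm (w - vbar) \<le> \<delta> \<Longrightarrow> \<epsilon> \<le> f1 w \<and> \<epsilon> \<le> f2 w"
    and f3: "0 \<le> f3 vs"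
  shows "ennreal (3*cb*\<eta>*(\<delta> powr \<gamma>)*\<epsilon>^2*f3 vs/3200) \<le> sphere_nn_integral (\<lambda>\<sigma>.
      ennreal (kernelB \<gamma> b v vs \<sigma> * f1 (vpost v vs \<sigma>) * f2 (vpost_star v vs \<sigma>) * f3 vs))"
proof -
  define p where "p = (v - vbar) + (vs - vbar)"
  have "sqrt \<eta> \<le> 1" using e by simp
  then have nu: "norm (vs - vbar) \<le> \<delta>/10" using u d
    by (smt (verit, best) divide_right_mono mult_left_le)
  have "norm (v - vbar) - norm (vs - vbar) \<le> norm p"
    unfolding p_def using norm_triangle_ineq2[of "v - vbar" "- (vs - vbar)"] by (simp add: norm_minus_commute)
  then have "p \<noteq> 0" using a1 nu d by auto
  then have n1: "norm (sgn p) = 1" by (simp add: norm_sgn)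
  define c where "c = (\<delta> powr \<gamma> / 4) * cb * \<epsilon> * \<epsilon> * f3 vs"
  have c0: "0 \<le> c" unfolding c_def using cb ep f3 by simp
  have hg: "ennreal c \<le> ennreal (kernelB \<gamma> b v vs \<sigma> * f1 (vpost v vs \<sigma>) * f2 (vpost_star v vs \<sigma>) * f3 vs)"
    if s: "norm \<sigma> = 1" and bd: "\<bar>\<sigma> \<bullet> sgn p\<bar> \<le> \<eta>/4" for \<sigma>
  proof -
    note G = geo[OF d e a1 a2 u s bd[unfolded p_def]]
    have bb: "cb < b (cos_theta v vs \<sigma>)" using b_bound[OF hb G(4)] .
    have pw: "\<delta> powr \<gamma> / 4 \<le> norm (v - vs) powr \<gamma>" using powr_bound[OF d G(3) g] .
    have k: "\<delta> powr \<gamma> / 4 * cb \<le> kernelB \<gamma> b v vs \<sigma>"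
      unfolding kernelB_def using pw bb cb by (intro mult_mono) auto
    have F1: "\<epsilon> \<le> f1 (vpost v vs \<sigma>)" using hf[OF G(1)] by simp
    have F2: "\<epsilon> \<le> f2 (vpost_star v vs \<sigma>)" using hf[OF G(2)] by simp
    have k0: "0 \<le> \<delta> powr \<gamma> / 4 * cb" using cb by simp
    have "\<delta> powr \<gamma> / 4 * cb * \<epsilon> \<le> kernelB \<gamma> b v vs \<sigma> * f1 (vpost v vs \<sigma>)"
      using k F1 k0 ep by (intro mult_mono) auto
    moreover have "0 \<le> kernelB \<gamma> b v vs \<sigma> * f1 (vpost v vs \<sigma>)"
      using k k0 F1 ep by (intro mult_nonneg_nonneg) auto
    ultimately have "\<delta> powr \<gamma> / 4 * cb * \<epsilon> * \<epsilon> \<le> kernelB \<gamma> b v vs \<sigma> * f1 (vpost v vs \<sigma>) * f2 (vpost_star v vs \<sigma>)"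
      using F2 ep mult_mono by blast
    then have "c \<le> kernelB \<gamma> b v vs \<sigma> * f1 (vpost v vs \<sigma>) * f2 (vpost_star v vs \<sigma>) * f3 vs"
      unfolding c_def using f3 by (intro mult_right_mono) auto
    then show ?thesis by (rule ennreal_leI)
  qed
  have h1: "ennreal (3*c*(\<eta>/4)/200) \<le> sphere_nn_integral (\<lambda>\<sigma>.
      ennreal (kernelB \<gamma> b v vs \<sigma> * f1 (vpost v vs \<sigma>) * f2 (vpost_star v vs \<sigma>) * f3 vs))"
    using e c0 hg by (intro sphere_lower[OF n1]) auto
  have h2: "3*c*(\<eta>/4)/200 = 3*cb*\<eta>*(\<delta> powr \<gamma>)*\<epsilon>^2*f3 vs/3200"
    unfolding c_def by (simp add: power2_eq_square)
  show ?thesis using h1 unfolding h2 .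
qed

lemma cube_meas:
  fixes c :: vec3 and h :: real assumes h: "0 < h"
  shows "emeasure lborel (cbox (c - (\<chi> i. h)) (c + (\<chi> i. h))) = ennreal ((2*h)^3)"
proof -
  have "c \<in> cbox (c - (\<chi> i. h)) (c + (\<chi> i. h))" using h by (simp add: mem_box_cart)
  then have ne: "cbox (c - (\<chi> i. h)) (c + (\<chi> i. h)) \<noteq> {}" by blast
  have "measure lborel (cbox (c - (\<chi> i. h)) (c + (\<chi> i. h)))
     = (\<Prod>i\<in>UNIV. (c + (\<chi> i. h)) $ i - (c - (\<chi> i. h)) $ i)"
    by (rule content_cbox_cart[OF ne])
  also have "\<dots> = (2*h)^3" unfolding prod_UNIV_3 by (simp add: power3_eq_cube)
  finally have m: "measure lborel (cbox (c - (\<chi> i. h)) (c + (\<chi> i. h))) = (2*h)^3" .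
  have fin: "emeasure lborel (cbox (c - (\<chi> i. h)) (c + (\<chi> i. h))) \<noteq> top"
    using emeasure_lborel_cbox_finite by (simp add: less_top)
  show ?thesis using emeasure_eq_ennreal_measure[OF fin] m by (simp only:)
qed

lemma cube_sub_cball:
  fixes c :: vec3 and h :: real assumes h: "0 < h"
  shows "cbox (c - (\<chi> i. h)) (c + (\<chi> i. h)) \<subseteq> cball c (3*h)"
proof
  fix x assume x: "x \<in> cbox (c - (\<chi> i. h)) (c + (\<chi> i. h))"
  have h1: "c$i - h \<le> x$i \<and> x$i \<le> c$i + h" for i using x by (simp add: mem_box_cart)
  have h2: "\<bar>(x - c) $ i\<bar> \<le> h" for i using h1[of i] by (simp add: abs_le_iff)
  have "norm (x - c) \<le> 3*h"
    using norm_le_l1_cart[of "x - c"] h2[of 1] h2[of 2] h2[of 3] unfolding sum_3 by linarith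
  then show "x \<in> cball c (3*h)" by (simp add: dist_norm norm_minus_commute)
qed

lemma cball_meas:
  fixes c :: vec3 and \<rho> :: real assumes "0 < \<rho>"
  shows "ennreal (8/27 * \<rho>^3) \<le> emeasure lborel (cball c \<rho>)"
proof -
  have sub: "cbox (c - (\<chi> i. \<rho>/3)) (c + (\<chi> i. \<rho>/3)) \<subseteq> cball c \<rho>"
    using cube_sub_cball[of "\<rho>/3" c] assms by simp
  have "ennreal (8/27 * \<rho>^3) = ennreal ((2*(\<rho>/3))^3)" by (simp add: power3_eq_cube mult.assoc)
  also have "\<dots> = emeasure lborel (cbox (c - (\<chi> i. \<rho>/3)) (c + (\<chi> i. \<rho>/3)))"
    using assms by (intro cube_meas[symmetric]) auto
  also have "\<dots> \<le> emeasure lborel (cball c \<rho>)"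
    using sub by (rule emeasure_mono) auto
  finally show ?thesis .
qed

lemma cball0_meas_le:
  fixes R :: real assumes "0 < R"
  shows "emeasure lborel (cball (0::vec3) R) \<le> ennreal (8 * R^3)"
proof -
  have "cball (0::vec3) R \<subseteq> cbox (0 - (\<chi> i. R)) (0 + (\<chi> i. R))"
  proof
    fix x :: vec3 assume "x \<in> cball 0 R"
    then have "norm x \<le> R" by simp
    then have "\<bar>x $ i\<bar> \<le> R" for i using component_le_norm_cart[of x i] by simp
    then show "x \<in> cbox (0 - (\<chi> i. R)) (0 + (\<chi> i. R))" unfolding mem_box_cart by (simp add: abs_le_iff) (smt (verit))
  qed
  then have "emeasure lborel (cball (0::vec3) R) \<le> emeasure lborel (cbox (0 - (\<chi> i. R)) (0 + (\<chi> i. R)) :: vec3 set)"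
    by (rule emeasure_mono) auto
  also have "\<dots> = ennreal ((2*R)^3)" using assms by (rule cube_meas)
  also have "(2*R)^3 = 8 * R^3" by (simp add: power3_eq_cube)
  finally show ?thesis .
qed

lemma outer:
  fixes v vbar :: vec3 and \<delta> \<eta> \<gamma> cb \<epsilon> :: real
    and b :: "real \<Rightarrow> real" and f1 f2 f3 :: "vec3 \<Rightarrow> real"
  assumes d: "0 < \<delta>" and e: "0 < \<eta>" "\<eta> < 3/10"
    and a1: "\<delta> < norm (v - vbar)" and a2: "norm (v - vbar) \<le> sqrt 2 * \<delta> * (1 - \<eta>)"
    and g: "0 \<le> \<gamma>" "\<gamma> \<le> 2" and cb: "0 < cb"
    and hb: "\<forall>\<theta>\<in>{pi/4..3*pi/4}. b (cos \<theta>) > cb"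
    and ep: "0 \<le> \<epsilon>" and hf: "\<And>w. norm (w - vbar) \<le> \<delta> \<Longrightarrow> \<epsilon> \<le> f1 w \<and> \<epsilon> \<le> f2 w"
    and f3: "\<And>w. 0 \<le> f3 w"
  shows "(\<integral>\<^sup>+vs. indicator (cball vbar (\<delta> * sqrt \<eta> / 10)) vs
            * ennreal (3*cb*\<eta>*(\<delta> powr \<gamma>)*\<epsilon>^2*f3 vs/3200) \<partial>lborel) \<le> Q1 \<gamma> b f1 f2 f3 v"
  unfolding Q1_def
proof (rule nn_integral_mono)
  fix vs :: vec3
  show "indicator (cball vbar (\<delta> * sqrt \<eta> / 10)) vs * ennreal (3*cb*\<eta>*(\<delta> powr \<gamma>)*\<epsilon>^2*f3 vs/3200)
     \<le> sphere_nn_integral (\<lambda>\<sigma>. ennreal (kernelB \<gamma> b v vs \<sigma> * f1 (vpost v vs \<sigma>) * f2 (vpost_star v vs \<sigma>) * f3 vs))"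
  proof (cases "vs \<in> cball vbar (\<delta> * sqrt \<eta> / 10)")
    case True
    then have u: "norm (vs - vbar) \<le> \<delta> * sqrt \<eta> / 10" by (simp add: dist_norm norm_minus_commute)
    show ?thesis using True inner_bound[OF d e a1 a2 u g cb hb ep hf f3] by simp
  qed simp
qed

lemma part2:
  fixes v vbar :: vec3 and \<delta> \<eta> \<gamma> cb \<epsilon> :: real
    and b :: "real \<Rightarrow> real" and f1 f2 f3 :: "vec3 \<Rightarrow> real"
  assumes d: "0 < \<delta>" and e: "0 < \<eta>" "\<eta> < 3/10"
    and a1: "\<delta> < norm (v - vbar)" and a2: "norm (v - vbar) \<le> sqrt 2 * \<delta> * (1 - \<eta>)"
    and g: "0 \<le> \<gamma>" "\<gamma> \<le> 2" and cb: "0 < cb"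
    and hb: "\<forall>\<theta>\<in>{pi/4..3*pi/4}. b (cos \<theta>) > cb"
    and ep: "0 \<le> \<epsilon>" and hf: "\<And>w. norm (w - vbar) \<le> \<delta> \<Longrightarrow> \<epsilon> \<le> f1 w \<and> \<epsilon> \<le> f2 w"
    and f3: "\<And>w. 0 \<le> f3 w" and f3e: "\<And>w. norm (w - vbar) \<le> \<delta> \<Longrightarrow> \<epsilon> \<le> f3 w"
  shows "ennreal (cb/3600000 * \<delta> powr (3 + \<gamma>) * \<eta> powr (5/2) * \<epsilon> ^ 3) \<le> Q1 \<gamma> b f1 f2 f3 v"
proof -
  define \<rho> where "\<rho> = \<delta> * sqrt \<eta> / 10"
  define A where "A = 3*cb*\<eta>*(\<delta> powr \<gamma>)*\<epsilon>^2/3200"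
  have A0: "0 \<le> A" unfolding A_def using cb e ep by simp
  have rho0: "0 < \<rho>" unfolding \<rho>_def using d e by simp
  have "sqrt \<eta> \<le> 1" using e by simp
  then have "\<delta> * sqrt \<eta> \<le> \<delta> * 1" using d by (intro mult_left_mono) auto
  then have rd: "\<rho> \<le> \<delta>" unfolding \<rho>_def using d by linarith
  have pw: "ennreal (A * \<epsilon>) * indicator (cball vbar \<rho>) vs
      \<le> indicator (cball vbar \<rho>) vs * ennreal (3*cb*\<eta>*(\<delta> powr \<gamma>)*\<epsilon>^2*f3 vs/3200)" for vs
  proof (cases "vs \<in> cball vbar \<rho>")
    case True
    then have "norm (vs - vbar) \<le> \<delta>" using rd by (simp add: dist_norm norm_minus_commute)
    then have "\<epsilon> \<le> f3 vs" by (rule f3e)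
    then have "A * \<epsilon> \<le> A * f3 vs" using A0 by (intro mult_left_mono) auto
    also have "A * f3 vs = 3*cb*\<eta>*(\<delta> powr \<gamma>)*\<epsilon>^2*f3 vs/3200" unfolding A_def by simp
    finally have "A * \<epsilon> \<le> 3*cb*\<eta>*(\<delta> powr \<gamma>)*\<epsilon>^2*f3 vs/3200" .
    then show ?thesis using True by (simp add: ennreal_leI)
  qed simp
  have "ennreal (A * \<epsilon>) * ennreal (8/27 * \<rho>^3) \<le> ennreal (A * \<epsilon>) * emeasure lborel (cball vbar \<rho>)"
    using cball_meas[OF rho0] by (intro mult_left_mono) auto
  also have "\<dots> = (\<integral>\<^sup>+vs. ennreal (A * \<epsilon>) * indicator (cball vbar \<rho>) vs \<partial>lborel)"
    by (simp add: nn_integral_cmult_indicator)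
  also have "\<dots> \<le> (\<integral>\<^sup>+vs. indicator (cball vbar \<rho>) vs * ennreal (3*cb*\<eta>*(\<delta> powr \<gamma>)*\<epsilon>^2*f3 vs/3200) \<partial>lborel)"
    by (intro nn_integral_mono pw)
  also have "\<dots> \<le> Q1 \<gamma> b f1 f2 f3 v" unfolding \<rho>_def by (rule outer[OF d e a1 a2 g cb hb ep hf f3])
  finally have Q0: "ennreal (A * \<epsilon>) * ennreal (8/27 * \<rho>^3) \<le> Q1 \<gamma> b f1 f2 f3 v" .
  have "ennreal (A * \<epsilon> * (8/27 * \<rho>^3)) = ennreal (A * \<epsilon>) * ennreal (8/27 * \<rho>^3)"
    using A0 ep rho0 by (intro ennreal_mult) auto
  with Q0 have Q: "ennreal (A * \<epsilon> * (8/27 * \<rho>^3)) \<le> Q1 \<gamma> b f1 f2 f3 v" by simp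
  have r3: "\<rho>^3 = \<delta>^3 * (\<eta> * sqrt \<eta>) / 1000" unfolding \<rho>_def using e
    by (simp add: power3_eq_cube real_sqrt_mult_self)
  have d3: "\<delta> powr (3 + \<gamma>) = \<delta>^3 * \<delta> powr \<gamma>" using d by (simp add: powr_add powr_realpow)
  have e52: "\<eta> powr (5/2) = \<eta>^2 * sqrt \<eta>"
  proof -
    have "\<eta> powr (5/2) = \<eta> powr (2 + 1/2)" by simp
    also have "\<dots> = \<eta> powr 2 * \<eta> powr (1/2)" by (rule powr_add)
    also have "\<eta> powr 2 = \<eta>^2" using e powr_realpow[of \<eta> 2] by simp
    also have "\<eta> powr (1/2) = sqrt \<eta>" using e by (simp add: powr_half_sqrt)
    finally show ?thesis .
  qed
  have eqA: "A * \<epsilon> * (8/27 * \<rho>^3) = cb/3600000 * \<delta> powr (3 + \<gamma>) * \<eta> powr (5/2) * \<epsilon> ^ 3"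
    unfolding A_def r3 d3 e52 by (simp add: power2_eq_square power3_eq_cube)
  show ?thesis using Q unfolding eqA .
qed

lemma norm1s_eq:
  assumes f0: "\<And>v. 0 \<le> f v"
  shows "norm1s 2 f = (\<integral>\<^sup>+v. ennreal (f v * (1 + (norm v)^2)) \<partial>lborel)"
  unfolding norm1s_def
proof (rule nn_integral_cong)
  fix v :: vec3
  have "0 < 1 + (norm v)^2" by (simp add: add_pos_nonneg)
  then have "(1 + (norm v)^2) powr (2/2) = 1 + (norm v)^2" by simp
  then show "ennreal (\<bar>f v\<bar> * (1 + (norm v)^2) powr (2/2)) = ennreal (f v * (1 + (norm v)^2))"
    using f0[of v] by simp
qed

lemma tail:
  fixes f :: "vec3 \<Rightarrow> real"
  assumes fm[measurable]: "f \<in> borel_measurable lborel" and f01: "\<And>v. 0 \<le> f v" "\<And>v. f v \<le> 1"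
    and fin: "norm1s 2 f < \<infinity>" and Npos: "0 < enn2real (norm1s 2 f)"
  shows "(\<integral>\<^sup>+y. ennreal (f y) \<partial>lborel) \<le> ennreal (9 * enn2real (norm1s 2 f) powr (3/5))"
proof -
  define N where "N = enn2real (norm1s 2 f)"
  have N0: "0 < N" using Npos unfolding N_def .
  have NN: "norm1s 2 f = ennreal N" unfolding N_def using fin by (simp add: ennreal_enn2real less_top)
  define R where "R = N powr (1/5)"
  have R0: "0 < R" unfolding R_def using N0 by simp
  have pwr: "f y \<le> indicator (cball 0 R) y + (1/R^2) * (f y * (1 + (norm y)^2))" for y :: vec3
  proof (cases "y \<in> cball 0 R")
    case True
    have "0 \<le> (1/R^2) * (f y * (1 + (norm y)^2))" using f01(1)[of y] by (simp add: add_pos_nonneg)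
    then show ?thesis using True f01(2)[of y] by simp
  next
    case False
    then have "R < norm y" by simp
    then have "R^2 \<le> (norm y)^2" using R0 by (intro power_mono) auto
    then have "R^2 \<le> 1 + (norm y)^2" by simp
    then have "f y * R^2 \<le> f y * (1 + (norm y)^2)" using f01(1)[of y] by (intro mult_left_mono) auto
    then have "f y \<le> (f y * (1 + (norm y)^2)) / R^2" using R0 by (simp add: field_simps)
    then show ?thesis using False by simp
  qed
  have pw: "ennreal (f y) \<le> indicator (cball 0 R) y + ennreal (1/R^2) * ennreal (f y * (1 + (norm y)^2))" for y :: vec3
  proof -
    have "ennreal (f y) \<le> ennreal (indicator (cball 0 R) y + (1/R^2) * (f y * (1 + (norm y)^2)))"
      using pwr by (rule ennreal_leI)
    also have "\<dots> = ennreal (indicator (cball 0 R) y) + ennreal ((1/R^2) * (f y * (1 + (norm y)^2)))"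
      using f01(1)[of y] by (intro ennreal_plus) (auto simp: add_pos_nonneg)
    also have "ennreal ((1/R^2) * (f y * (1 + (norm y)^2))) = ennreal (1/R^2) * ennreal (f y * (1 + (norm y)^2))"
      using f01(1)[of y] by (intro ennreal_mult) (auto simp: add_pos_nonneg)
    also have "ennreal (indicator (cball 0 R) y) = indicator (cball 0 R) y" by (rule ennreal_indicator)
    finally show ?thesis .
  qed
  have "(\<integral>\<^sup>+y. ennreal (f y) \<partial>lborel)
      \<le> (\<integral>\<^sup>+y. indicator (cball 0 R) y + ennreal (1/R^2) * ennreal (f y * (1 + (norm y)^2)) \<partial>lborel)"
    by (intro nn_integral_mono pw)
  also have "\<dots> = (\<integral>\<^sup>+y. indicator (cball (0::vec3) R) y \<partial>lborel)
      + (\<integral>\<^sup>+y. ennreal (1/R^2) * ennreal (f y * (1 + (norm y)^2)) \<partial>lborel)"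
    by (rule nn_integral_add) (auto intro!: borel_measurable_indicator borel_closed)
  also have "\<dots> = emeasure lborel (cball (0::vec3) R) + ennreal (1/R^2) * norm1s 2 f"
    using norm1s_eq[of f] f01 by (simp add: nn_integral_cmult)
  also have "\<dots> \<le> ennreal (8 * R^3) + ennreal (1/R^2) * ennreal N"
    using cball0_meas_le[OF R0] NN by simp
  also have "ennreal (1/R^2) * ennreal N = ennreal (1/R^2 * N)"
    using R0 N0 by (intro ennreal_mult[symmetric]) auto
  also have "ennreal (8 * R^3) + ennreal (1/R^2 * N) = ennreal (8 * R^3 + 1/R^2 * N)"
    using R0 N0 by (intro ennreal_plus[symmetric]) auto
  also have "1/R^2 * N = N / R^2" by simp
  also have "8 * R^3 + N / R^2 = 9 * N powr (3/5)"
  proof -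
    have "R^3 = R powr (real 3)" using R0 by (rule powr_realpow[symmetric])
    also have "\<dots> = N powr (3/5)" unfolding R_def by (simp add: powr_powr)
    finally have r3: "R^3 = N powr (3/5)" .
    have "R^2 = R powr (real 2)" using R0 by (rule powr_realpow[symmetric])
    also have "\<dots> = N powr (2/5)" unfolding R_def by (simp add: powr_powr)
    finally have r2: "R^2 = N powr (2/5)" .
    moreover have "N / N powr (2/5) = N powr (3/5)"
    proof -
      have "N powr (3/5) = N powr (1 - 2/5)" by simp
      also have "\<dots> = N powr 1 / N powr (2/5)" by (rule powr_diff)
      finally show ?thesis using N0 by simp
    qed
    then show ?thesis using r2 r3 by simp
  qed
  finally show ?thesis unfolding N_def .
qed

lemma I1_bound:
  fixes f :: "vec3 \<Rightarrow> real" and vbar :: vec3 and \<rho> :: real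
  assumes fm[measurable]: "f \<in> borel_measurable lborel" and f01: "\<And>v. 0 \<le> f v" "\<And>v. f v \<le> 1"
    and fin: "norm1s 2 f < \<infinity>" and Npos: "0 < enn2real (norm1s 2 f)" and r0: "0 < \<rho>"
  shows "ennreal (8/27*\<rho>^3 - 9 * enn2real (norm1s 2 f) powr (3/5))
     \<le> (\<integral>\<^sup>+vs. indicator (cball vbar \<rho>) vs * ennreal (1 - f vs) \<partial>lborel)"
proof -
  define M where "M = 9 * enn2real (norm1s 2 f) powr (3/5)"
  have M0: "0 \<le> M" unfolding M_def by simp
  have Gm[measurable]: "cball vbar \<rho> \<in> sets borel" by (simp add: borel_closed)
  define I1 where "I1 = (\<integral>\<^sup>+vs. indicator (cball vbar \<rho>) vs * ennreal (1 - f vs) \<partial>lborel)"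
  define I2 where "I2 = (\<integral>\<^sup>+vs. indicator (cball vbar \<rho>) vs * ennreal (f vs) \<partial>lborel)"
  have "I1 + I2 = (\<integral>\<^sup>+vs. indicator (cball vbar \<rho>) vs * ennreal (1 - f vs)
        + indicator (cball vbar \<rho>) vs * ennreal (f vs) \<partial>lborel)"
    unfolding I1_def I2_def by (rule nn_integral_add[symmetric]) auto
  also have "\<dots> = (\<integral>\<^sup>+vs. indicator (cball vbar \<rho>) vs \<partial>lborel)"
  proof (rule nn_integral_cong)
    fix vs :: vec3
    have "ennreal (1 - f vs) + ennreal (f vs) = ennreal 1"
      using f01[of vs] by (subst ennreal_plus[symmetric]) auto
    then show "indicator (cball vbar \<rho>) vs * ennreal (1 - f vs) + indicator (cball vbar \<rho>) vs * ennreal (f vs)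
        = indicator (cball vbar \<rho>) vs"
      by (simp add: distrib_left[symmetric])
  qed
  also have "\<dots> = emeasure lborel (cball vbar \<rho>)" by simp
  finally have sum: "I1 + I2 = emeasure lborel (cball vbar \<rho>)" .
  have "I2 \<le> (\<integral>\<^sup>+y. ennreal (f y) \<partial>lborel)" unfolding I2_def
    by (intro nn_integral_mono) (simp add: indicator_def)
  also have "\<dots> \<le> ennreal M" unfolding M_def using tail[OF fm f01 fin Npos] .
  finally have I2M: "I2 \<le> ennreal M" .
  have "ennreal (8/27*\<rho>^3) \<le> I1 + I2" using sum cball_meas[OF r0, of vbar] by simp
  also have "\<dots> \<le> I1 + ennreal M" using I2M by (intro add_left_mono)
  finally have le: "ennreal (8/27*\<rho>^3) \<le> ennreal M + I1" by (simp add: add.commute)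
  have "ennreal (8/27*\<rho>^3 - M) = ennreal (8/27*\<rho>^3) - ennreal M" using M0 by (rule ennreal_minus[symmetric])
  also have "\<dots> \<le> I1" using le by (simp add: ennreal_minus_le_iff)
  finally show ?thesis unfolding M_def I1_def .
qed

lemma N_pos:
  fixes f :: "vec3 \<Rightarrow> real" and vbar :: vec3
  assumes f0: "\<And>v. 0 \<le> f v" and fin: "norm1s 2 f < \<infinity>" and d: "0 < \<delta>" and ep: "0 < \<epsilon>"
    and hf: "\<And>v. norm (v - vbar) \<le> \<delta> \<Longrightarrow> \<epsilon> \<le> f v"
  shows "0 < enn2real (norm1s 2 f)"
proof -
  have pw: "ennreal \<epsilon> * indicator (cball vbar \<delta>) v \<le> ennreal (f v * (1 + (norm v)^2))" for v
  proof (cases "v \<in> cball vbar \<delta>")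
    case True
    then have "\<epsilon> \<le> f v" using hf by (simp add: dist_norm norm_minus_commute)
    also have "f v \<le> f v * (1 + (norm v)^2)" using f0[of v] by (simp add: mult_le_cancel_left1)
    finally show ?thesis using True by (simp add: ennreal_leI)
  qed simp
  have "0 < ennreal \<epsilon> * ennreal (8/27*\<delta>^3)" using ep d by (simp add: ennreal_mult[symmetric])
  also have "\<dots> \<le> ennreal \<epsilon> * emeasure lborel (cball vbar \<delta>)"
    using cball_meas[OF d, of vbar] by (intro mult_left_mono) auto
  also have "\<dots> = (\<integral>\<^sup>+v. ennreal \<epsilon> * indicator (cball vbar \<delta>) v \<partial>lborel)"
    by (simp add: nn_integral_cmult_indicator borel_closed)
  also have "\<dots> \<le> norm1s 2 f" unfolding norm1s_eq[OF f0]
    by (intro nn_integral_mono pw)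
  finally show ?thesis using fin by (simp add: enn2real_positive_iff)
qed

lemma part1:
  fixes v vbar :: vec3 and \<delta> \<eta> \<gamma> cb \<epsilon> :: real
    and b :: "real \<Rightarrow> real" and f :: "vec3 \<Rightarrow> real"
  assumes d: "0 < \<delta>" and e: "0 < \<eta>" "\<eta> < 3/10"
    and a1: "\<delta> < norm (v - vbar)" and a2: "norm (v - vbar) \<le> sqrt 2 * \<delta> * (1 - \<eta>)"
    and g: "0 \<le> \<gamma>" "\<gamma> \<le> 2" and cb: "0 < cb"
    and hb: "\<forall>\<theta>\<in>{pi/4..3*pi/4}. b (cos \<theta>) > cb"
    and fm[measurable]: "f \<in> borel_measurable lborel" and f01: "\<And>w. 0 \<le> f w" "\<And>w. f w \<le> 1"
    and fin: "norm1s 2 f < \<infinity>"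
    and ep: "0 < \<epsilon>" and hfe: "\<And>w. norm (w - vbar) \<le> \<delta> \<Longrightarrow> \<epsilon> \<le> f w"
  shows "ennreal (\<delta> powr (3 + \<gamma>) * \<epsilon>\<^sup>2 * (cb/3600000 * \<eta> powr (5/2)
            - 27*cb/3200 * min (\<delta> powr (-3) * enn2real (norm1s 2 f) powr (3/5)) 1))
         \<le> Q1 \<gamma> b f f (\<lambda>w. 1 - f w) v"
proof -
  define N where "N = enn2real (norm1s 2 f)"
  define Mx where "Mx = N powr (3/5)"
  define P where "P = \<delta> powr (3 + \<gamma>)"
  define E where "E = \<eta> powr (5/2)"
  define D where "D = \<delta> powr (-3)"
  define RHS where "RHS = P * \<epsilon>\<^sup>2 * (cb/3600000 * E - 27*cb/3200 * min (D * Mx) 1)"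
  define \<rho> where "\<rho> = \<delta> * sqrt \<eta> / 10"
  define A where "A = 3*cb*\<eta>*(\<delta> powr \<gamma>)*\<epsilon>^2/3200"
  define X where "X = 8/27*\<rho>^3 - 9 * Mx"
  have Npos: "0 < N" unfolding N_def using N_pos[OF f01(1) fin d ep hfe] .
  have A0: "0 \<le> A" unfolding A_def using cb e ep by simp
  have rho0: "0 < \<rho>" unfolding \<rho>_def using d e by simp
  have Gm[measurable]: "cball vbar \<rho> \<in> sets borel" by (simp add: borel_closed)
  have Mx0: "0 \<le> Mx" unfolding Mx_def by simp
  have hf: "\<And>w. norm (w - vbar) \<le> \<delta> \<Longrightarrow> \<epsilon> \<le> f w \<and> \<epsilon> \<le> f w" using hfe by simp
  have f3: "\<And>w. 0 \<le> 1 - f w" using f01(2) by simp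
  have O: "(\<integral>\<^sup>+vs. indicator (cball vbar \<rho>) vs * ennreal (3*cb*\<eta>*(\<delta> powr \<gamma>)*\<epsilon>^2*(1 - f vs)/3200) \<partial>lborel)
      \<le> Q1 \<gamma> b f f (\<lambda>w. 1 - f w) v"
    unfolding \<rho>_def using outer[OF d e a1 a2 g cb hb _ hf f3] ep by simp
  have "(\<integral>\<^sup>+vs. indicator (cball vbar \<rho>) vs * ennreal (3*cb*\<eta>*(\<delta> powr \<gamma>)*\<epsilon>^2*(1 - f vs)/3200) \<partial>lborel)
      = (\<integral>\<^sup>+vs. ennreal A * (indicator (cball vbar \<rho>) vs * ennreal (1 - f vs)) \<partial>lborel)"
  proof (rule nn_integral_cong)
    fix vs :: vec3
    have "ennreal (3*cb*\<eta>*(\<delta> powr \<gamma>)*\<epsilon>^2*(1 - f vs)/3200) = ennreal (A * (1 - f vs))"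
      unfolding A_def by simp
    also have "\<dots> = ennreal A * ennreal (1 - f vs)" using A0 f3[of vs] by (rule ennreal_mult)
    finally show "indicator (cball vbar \<rho>) vs * ennreal (3*cb*\<eta>*(\<delta> powr \<gamma>)*\<epsilon>^2*(1 - f vs)/3200)
        = ennreal A * (indicator (cball vbar \<rho>) vs * ennreal (1 - f vs))"
      by (simp add: ac_simps)
  qed
  also have "\<dots> = ennreal A * (\<integral>\<^sup>+vs. indicator (cball vbar \<rho>) vs * ennreal (1 - f vs) \<partial>lborel)"
    by (rule nn_integral_cmult) measurable
  finally have O2: "ennreal A * (\<integral>\<^sup>+vs. indicator (cball vbar \<rho>) vs * ennreal (1 - f vs) \<partial>lborel)
      \<le> Q1 \<gamma> b f f (\<lambda>w. 1 - f w) v" using O by simp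
  have I1: "ennreal X \<le> (\<integral>\<^sup>+vs. indicator (cball vbar \<rho>) vs * ennreal (1 - f vs) \<partial>lborel)"
    unfolding X_def Mx_def N_def
    using I1_bound[OF fm f01 fin _ rho0] Npos unfolding N_def by simp
  have QAX: "ennreal A * ennreal X \<le> Q1 \<gamma> b f f (\<lambda>w. 1 - f w) v"
    using O2 I1 by (meson mult_left_mono order_trans zero_le)
  show ?thesis
  proof (cases "RHS \<le> 0")
    case True
    then have "ennreal RHS = 0" by (simp add: ennreal_eq_0_iff)
    then show ?thesis unfolding RHS_def P_def E_def D_def Mx_def N_def by simp
  next
    case False
    then have Rpos: "0 < RHS" by simp
    have E1: "E \<le> 1" unfolding E_def using e powr_mono'[of 0 "5/2" \<eta>] by simp
    have P0: "0 < P" unfolding P_def using d by simp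
    have PD: "P * D = \<delta> powr \<gamma>" unfolding P_def D_def using d by (simp add: powr_add[symmetric])
    have r3: "\<rho>^3 = \<delta>^3 * (\<eta> * sqrt \<eta>) / 1000" unfolding \<rho>_def using e
      by (simp add: power3_eq_cube real_sqrt_mult_self)
    have d3: "P = \<delta>^3 * \<delta> powr \<gamma>" unfolding P_def using d by (simp add: powr_add powr_realpow)
    have e52: "E = \<eta>^2 * sqrt \<eta>"
    proof -
      have "\<eta> powr (5/2) = \<eta> powr (2 + 1/2)" by simp
      also have "\<dots> = \<eta> powr 2 * \<eta> powr (1/2)" by (rule powr_add)
      also have "\<eta> powr 2 = \<eta>^2" using e powr_realpow[of \<eta> 2] by simp
      also have "\<eta> powr (1/2) = sqrt \<eta>" using e by (simp add: powr_half_sqrt)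
      finally show ?thesis unfolding E_def .
    qed
    have AX: "A * X = cb/3600000 * P * E * \<epsilon>\<^sup>2 - 9 * A * Mx"
      unfolding X_def A_def r3 d3 e52 by (simp add: power2_eq_square power3_eq_cube algebra_simps)
    have small: "D * Mx \<le> 1"
    proof (rule ccontr)
      assume "\<not> D * Mx \<le> 1"
      then have "min (D * Mx) 1 = 1" by simp
      then have "RHS = P * \<epsilon>\<^sup>2 * (cb/3600000 * E - 27*cb/3200)" unfolding RHS_def by simp
      moreover have "cb/3600000 * E - 27*cb/3200 \<le> 0" using E1 cb by simp
      moreover have "0 \<le> P * \<epsilon>\<^sup>2" using P0 by simp
      ultimately have "RHS \<le> 0" by (simp add: mult_nonneg_nonpos)
      then show False using Rpos by simp
    qed
    then have "RHS = cb/3600000 * P * E * \<epsilon>\<^sup>2 - 27*cb/3200 * (P * D) * Mx * \<epsilon>\<^sup>2"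
      unfolding RHS_def by (simp add: algebra_simps)
    also have "\<dots> = cb/3600000 * P * E * \<epsilon>\<^sup>2 - 27*cb/3200 * (\<delta> powr \<gamma>) * Mx * \<epsilon>\<^sup>2" using PD by simp
    also have "\<dots> \<le> cb/3600000 * P * E * \<epsilon>\<^sup>2 - 9 * A * Mx"
    proof -
      have "9 * A * Mx = (27*cb/3200 * (\<delta> powr \<gamma>) * Mx * \<epsilon>\<^sup>2) * \<eta>" unfolding A_def by simp
      also have "\<dots> \<le> (27*cb/3200 * (\<delta> powr \<gamma>) * Mx * \<epsilon>\<^sup>2) * 1"
        using e cb Mx0 by (intro mult_left_mono) auto
      finally show ?thesis by simp
    qed
    also have "\<dots> = A * X" using AX by simp
    finally have RAX: "RHS \<le> A * X" .
    have X0: "0 \<le> X"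
    proof (rule ccontr)
      assume "\<not> 0 \<le> X"
      then have "A * X \<le> 0" using A0 by (simp add: mult_nonneg_nonpos)
      then show False using RAX Rpos by simp
    qed
    have "ennreal RHS \<le> ennreal (A * X)" using RAX by (rule ennreal_leI)
    also have "\<dots> = ennreal A * ennreal X" using A0 X0 by (rule ennreal_mult)
    also have "\<dots> \<le> Q1 \<gamma> b f f (\<lambda>w. 1 - f w) v" by (rule QAX)
    finally show ?thesis unfolding RHS_def P_def E_def D_def Mx_def N_def .
  qed
qed

lemma eta_bound:
  fixes \<eta> :: real assumes "\<eta> < 1 - 1 / sqrt 2" shows "\<eta> < 3/10"
proof -
  have "sqrt 2 < sqrt ((10/7)^2)" by (rule real_sqrt_less_mono) (simp add: power2_eq_square)
  then have s: "sqrt 2 < 10/7" by simp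
  have "7/10 < 1 / sqrt 2" using s by (simp add: field_simps)
  then show ?thesis using assms by simp
qed

theorem lemma5p2:
  fixes \<gamma> cb :: real
  assumes "0 \<le> \<gamma>" "\<gamma> \<le> 2" "cb > 0"
  shows "\<exists>C3>0. \<forall>Cb>0. \<exists>C1>0. \<exists>C2>0.
    \<forall>(b :: real \<Rightarrow> real) (f :: vec3 \<Rightarrow> real) (vbar :: vec3) (\<delta> :: real) (\<epsilon> :: real).
      admissible_b b \<and> Cb_of b = ennreal Cb
      \<and> (\<forall>\<theta>\<in>{pi/4..3*pi/4}. b (cos \<theta>) > cb)
      \<and> f \<in> borel_measurable lborel \<and> (\<forall>v. 0 \<le> f v \<and> f v \<le> 1)
      \<and> norm1s 2 f < \<infinity>
      \<and> \<delta> > 0 \<and> 0 < \<epsilon> \<and> \<epsilon> < 1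
      \<and> (\<forall>v. norm (v - vbar) \<le> \<delta> \<longrightarrow> f v \<ge> \<epsilon>)
      \<longrightarrow>
      (\<forall>\<eta> v. 0 < \<eta> \<and> \<eta> < 1 - 1 / sqrt 2
          \<and> \<delta> < norm (v - vbar) \<and> norm (v - vbar) \<le> sqrt 2 * \<delta> * (1 - \<eta>) \<longrightarrow>
        Q1 \<gamma> b f f (\<lambda>w. 1 - f w) v \<ge>
          ennreal (\<delta> powr (3 + \<gamma>) * \<epsilon>\<^sup>2 *
            (C1 * \<eta> powr (5/2)
             - C2 * min (\<delta> powr (-3) * enn2real (norm1s 2 f) powr (3/5)) 1)))
      \<and> ((\<forall>v. norm (v - vbar) \<le> \<delta> \<longrightarrow> f v \<le> 1 - \<epsilon>) \<longrightarrow>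
         (\<forall>\<eta> v. 0 < \<eta> \<and> \<eta> < 1 - 1 / sqrt 2
            \<and> \<delta> < norm (v - vbar) \<and> norm (v - vbar) \<le> sqrt 2 * \<delta> * (1 - \<eta>) \<longrightarrow>
          Q1 \<gamma> b f f (\<lambda>w. 1 - f w) v \<ge> ennreal (C3 * \<delta> powr (3 + \<gamma>) * \<eta> powr (5/2) * \<epsilon> ^ 3)
          \<and> Q1 \<gamma> b (\<lambda>w. 1 - f w) (\<lambda>w. 1 - f w) f v \<ge> ennreal (C3 * \<delta> powr (3 + \<gamma>) * \<eta> powr (5/2) * \<epsilon> ^ 3)))"
  proof -
  have g: "0 \<le> \<gamma>" "\<gamma> \<le> 2" and cb: "0 < cb" using assms by auto
  have c1: "cb/3600000 > 0" and c2: "27*cb/3200 > 0" using cb by auto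
  have main: "\<forall>Cb. \<forall>(b :: real \<Rightarrow> real) (f :: vec3 \<Rightarrow> real) (vbar :: vec3) (\<delta> :: real) (\<epsilon> :: real).
      admissible_b b \<and> Cb_of b = ennreal Cb
      \<and> (\<forall>\<theta>\<in>{pi/4..3*pi/4}. b (cos \<theta>) > cb)
      \<and> f \<in> borel_measurable lborel \<and> (\<forall>v. 0 \<le> f v \<and> f v \<le> 1)
      \<and> norm1s 2 f < \<infinity>
      \<and> \<delta> > 0 \<and> 0 < \<epsilon> \<and> \<epsilon> < 1
      \<and> (\<forall>v. norm (v - vbar) \<le> \<delta> \<longrightarrow> f v \<ge> \<epsilon>)
      \<longrightarrow>
      (\<forall>\<eta> v. 0 < \<eta> \<and> \<eta> < 1 - 1 / sqrt 2
          \<and> \<delta> < norm (v - vbar) \<and> norm (v - vbar) \<le> sqrt 2 * \<delta> * (1 - \<eta>) \<longrightarrow>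
        Q1 \<gamma> b f f (\<lambda>w. 1 - f w) v \<ge>
          ennreal (\<delta> powr (3 + \<gamma>) * \<epsilon>\<^sup>2 *
            (cb/3600000 * \<eta> powr (5/2)
             - 27*cb/3200 * min (\<delta> powr (-3) * enn2real (norm1s 2 f) powr (3/5)) 1)))
      \<and> ((\<forall>v. norm (v - vbar) \<le> \<delta> \<longrightarrow> f v \<le> 1 - \<epsilon>) \<longrightarrow>
         (\<forall>\<eta> v. 0 < \<eta> \<and> \<eta> < 1 - 1 / sqrt 2
            \<and> \<delta> < norm (v - vbar) \<and> norm (v - vbar) \<le> sqrt 2 * \<delta> * (1 - \<eta>) \<longrightarrow>
          Q1 \<gamma> b f f (\<lambda>w. 1 - f w) v \<ge> ennreal (cb/3600000 * \<delta> powr (3 + \<gamma>) * \<eta> powr (5/2) * \<epsilon> ^ 3)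
          \<and> Q1 \<gamma> b (\<lambda>w. 1 - f w) (\<lambda>w. 1 - f w) f v \<ge> ennreal (cb/3600000 * \<delta> powr (3 + \<gamma>) * \<eta> powr (5/2) * \<epsilon> ^ 3)))"
  proof (intro allI impI, rule conjI)
    fix Cb :: real and b :: "real \<Rightarrow> real" and f :: "vec3 \<Rightarrow> real" and vbar :: vec3 and \<delta> \<epsilon> :: real
    assume H: "admissible_b b \<and> Cb_of b = ennreal Cb
      \<and> (\<forall>\<theta>\<in>{pi/4..3*pi/4}. b (cos \<theta>) > cb)
      \<and> f \<in> borel_measurable lborel \<and> (\<forall>v. 0 \<le> f v \<and> f v \<le> 1)
      \<and> norm1s 2 f < \<infinity>
      \<and> \<delta> > 0 \<and> 0 < \<epsilon> \<and> \<epsilon> < 1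
      \<and> (\<forall>v. norm (v - vbar) \<le> \<delta> \<longrightarrow> f v \<ge> \<epsilon>)"
    then have hb: "\<forall>\<theta>\<in>{pi/4..3*pi/4}. b (cos \<theta>) > cb" and fm: "f \<in> borel_measurable lborel"
      and f01: "\<And>w. 0 \<le> f w" "\<And>w. f w \<le> 1" and fin: "norm1s 2 f < \<infinity>"
      and d: "0 < \<delta>" and ep: "0 < \<epsilon>" and hfe: "\<And>w. norm (w - vbar) \<le> \<delta> \<Longrightarrow> \<epsilon> \<le> f w"
      by auto
    show "\<forall>\<eta> v. 0 < \<eta> \<and> \<eta> < 1 - 1 / sqrt 2
          \<and> \<delta> < norm (v - vbar) \<and> norm (v - vbar) \<le> sqrt 2 * \<delta> * (1 - \<eta>) \<longrightarrow>
        Q1 \<gamma> b f f (\<lambda>w. 1 - f w) v \<ge>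
          ennreal (\<delta> powr (3 + \<gamma>) * \<epsilon>\<^sup>2 *
            (cb/3600000 * \<eta> powr (5/2)
             - 27*cb/3200 * min (\<delta> powr (-3) * enn2real (norm1s 2 f) powr (3/5)) 1))"
    proof (intro allI impI)
      fix \<eta> :: real and v :: vec3
      assume "0 < \<eta> \<and> \<eta> < 1 - 1 / sqrt 2 \<and> \<delta> < norm (v - vbar) \<and> norm (v - vbar) \<le> sqrt 2 * \<delta> * (1 - \<eta>)"
      then have e: "0 < \<eta>" "\<eta> < 3/10" and a1: "\<delta> < norm (v - vbar)"
        and a2: "norm (v - vbar) \<le> sqrt 2 * \<delta> * (1 - \<eta>)" using eta_bound by auto
      show "Q1 \<gamma> b f f (\<lambda>w. 1 - f w) v \<ge>
          ennreal (\<delta> powr (3 + \<gamma>) * \<epsilon>\<^sup>2 *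
            (cb/3600000 * \<eta> powr (5/2)
             - 27*cb/3200 * min (\<delta> powr (-3) * enn2real (norm1s 2 f) powr (3/5)) 1))"
        using part1[OF d e a1 a2 g cb hb fm f01 fin ep hfe] by simp
    qed
    show "(\<forall>v. norm (v - vbar) \<le> \<delta> \<longrightarrow> f v \<le> 1 - \<epsilon>) \<longrightarrow>
         (\<forall>\<eta> v. 0 < \<eta> \<and> \<eta> < 1 - 1 / sqrt 2
            \<and> \<delta> < norm (v - vbar) \<and> norm (v - vbar) \<le> sqrt 2 * \<delta> * (1 - \<eta>) \<longrightarrow>
          Q1 \<gamma> b f f (\<lambda>w. 1 - f w) v \<ge> ennreal (cb/3600000 * \<delta> powr (3 + \<gamma>) * \<eta> powr (5/2) * \<epsilon> ^ 3)
          \<and> Q1 \<gamma> b (\<lambda>w. 1 - f w) (\<lambda>w. 1 - f w) f v \<ge> ennreal (cb/3600000 * \<delta> powr (3 + \<gamma>) * \<eta> powr (5/2) * \<epsilon> ^ 3))"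
    proof (intro allI impI)
      fix \<eta> :: real and v :: vec3
      assume U: "\<forall>v. norm (v - vbar) \<le> \<delta> \<longrightarrow> f v \<le> 1 - \<epsilon>"
      assume "0 < \<eta> \<and> \<eta> < 1 - 1 / sqrt 2 \<and> \<delta> < norm (v - vbar) \<and> norm (v - vbar) \<le> sqrt 2 * \<delta> * (1 - \<eta>)"
      then have e: "0 < \<eta>" "\<eta> < 3/10" and a1: "\<delta> < norm (v - vbar)"
        and a2: "norm (v - vbar) \<le> sqrt 2 * \<delta> * (1 - \<eta>)" using eta_bound by auto
      have ep0: "0 \<le> \<epsilon>" using ep by simp
      have hf1: "\<And>w. norm (w - vbar) \<le> \<delta> \<Longrightarrow> \<epsilon> \<le> f w \<and> \<epsilon> \<le> f w" using hfe by simp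
      have hf2: "\<And>w. norm (w - vbar) \<le> \<delta> \<Longrightarrow> \<epsilon> \<le> 1 - f w \<and> \<epsilon> \<le> 1 - f w" using U by force
      have f3a: "\<And>w. 0 \<le> 1 - f w" using f01(2) by simp
      have f3ea: "\<And>w. norm (w - vbar) \<le> \<delta> \<Longrightarrow> \<epsilon> \<le> 1 - f w" using U by force
      show "Q1 \<gamma> b f f (\<lambda>w. 1 - f w) v \<ge> ennreal (cb/3600000 * \<delta> powr (3 + \<gamma>) * \<eta> powr (5/2) * \<epsilon> ^ 3)
          \<and> Q1 \<gamma> b (\<lambda>w. 1 - f w) (\<lambda>w. 1 - f w) f v \<ge> ennreal (cb/3600000 * \<delta> powr (3 + \<gamma>) * \<eta> powr (5/2) * \<epsilon> ^ 3)"
        using part2[OF d e a1 a2 g cb hb ep0 hf1 f3a f3ea]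
          part2[of \<delta> \<eta> v vbar \<gamma> cb b \<epsilon> "\<lambda>w. 1 - f w" "\<lambda>w. 1 - f w" f, OF d e a1 a2 g cb hb ep0 hf2 f01(1) hfe]
        by simp
    qed
  qed
  show ?thesis
    apply (rule exI[of _ "cb/3600000"])
    apply (intro conjI c1 allI impI)
    apply (rule exI[of _ "cb/3600000"])
    apply (intro conjI c1)
    apply (rule exI[of _ "27*cb/3200"])
    apply (intro conjI c2)
    using main by blast
qed

end
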